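(* For any real $\lambda$ and any $0<y<\pi/2$, \[ \left(\lambda\int_0^y \frac{\cos \lambda t}{\cos t}\,dt\right)^2+ \left(\lambda\int_0^y \frac{\sin \lambda t}{\cos t}\,dt-1\right)^2<\frac{1}{\cos^2 y}. \] *)

theory Defs
  imports "HOL-Analysis.Analysis"
begin

end

theory Submission
  imports Defs
begin

theorem theorem2:
  fixes lambda y :: real
  assumes "0 < y" and "y < pi / 2"
  shows "(lambda * integral {0..y} (\<lambda>t. cos (lambda * t) / cos t))\<^sup>2
         + (lambda * integral {0..y} (\<lambda>t. sin (lambda * t) / cos t) - 1)\<^sup>2
         < 1 / (cos y)\<^sup>2"
proof -
  define I where "I = {0..y}"
  have cpos: "cos t > 0" if "t \<in> I" for t
    using that assms by (intro cos_gt_zero_pi) (auto simp: I_def)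
  have c2pos: "2 - (cos t)\<^sup>2 > 0" for t :: real
  proof -
    have "(cos t)\<^sup>2 \<le> 1" using sin_cos_squared_add[of t] zero_le_power2[of "sin t"] by linarith
    then show ?thesis by simp
  qed
  define f1 where "f1 = (\<lambda>t. cos (lambda * t) / cos t)"
  define f2 where "f2 = (\<lambda>t. sin (lambda * t) / cos t)"
  define F where "F = (\<lambda>t. integral {0..t} f1)"
  define G where "G = (\<lambda>t. integral {0..t} f2)"
  define u where "u = (\<lambda>t. lambda * F t)"
  define v where "v = (\<lambda>t. lambda * G t - 1)"
  define P where "P = (\<lambda>t. u t * cos (lambda * t) + v t * sin (lambda * t))"
  define Q where "Q = (\<lambda>t. u t * sin (lambda * t) - v t * cos (lambda * t))"
  define S where "S = (\<lambda>t::real. 1 / cos t)"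
  define S1 where "S1 = (\<lambda>t::real. sin t / (cos t)\<^sup>2)"
  define S2 where "S2 = (\<lambda>t::real. (2 - (cos t)\<^sup>2) / (cos t) ^ 3)"
  define R where "R = (\<lambda>t::real. (cos t)\<^sup>2 / (2 - (cos t)\<^sup>2))"
  define Rd where "Rd = (\<lambda>t::real. - 4 * cos t * sin t / (2 - (cos t)\<^sup>2)\<^sup>2)"
  define N where "N = (\<lambda>t. (S1 t - lambda * P t)\<^sup>2 + lambda\<^sup>2 * (S t - Q t)\<^sup>2)"
  define D where "D = (\<lambda>t. (S t)\<^sup>2 - (P t)\<^sup>2 - (Q t)\<^sup>2 - R t * N t)"
  have cont1: "continuous_on I f1"
    unfolding f1_def using cpos by (intro continuous_intros) (auto dest!: cpos)
  have cont2: "continuous_on I f2"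
    unfolding f2_def using cpos by (intro continuous_intros) (auto dest!: cpos)
  have dF: "(F has_real_derivative f1 t) (at t within I)" if "t \<in> I" for t
    unfolding F_def using integral_has_real_derivative[OF cont1[unfolded I_def] that[unfolded I_def]]
    by (simp add: I_def)
  have dG: "(G has_real_derivative f2 t) (at t within I)" if "t \<in> I" for t
    unfolding G_def using integral_has_real_derivative[OF cont2[unfolded I_def] that[unfolded I_def]]
    by (simp add: I_def)
  have dP: "(P has_real_derivative lambda * (S t - Q t)) (at t within I)" if "t \<in> I" for t
  proof -
    have "(P has_real_derivative
       lambda * f1 t * cos (lambda * t) + u t * (- sin (lambda * t) * lambda)
       + (lambda * f2 t * sin (lambda * t) + v t * (cos (lambda * t) * lambda))) (at t within I)"
      unfolding P_def u_def v_def
      by (rule derivative_eq_intros dF[OF that] dG[OF that] refl | simp)+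
    moreover have "lambda * f1 t * cos (lambda * t) + u t * (- sin (lambda * t) * lambda)
       + (lambda * f2 t * sin (lambda * t) + v t * (cos (lambda * t) * lambda)) = lambda * (S t - Q t)"
    proof -
      have "lambda * f1 t * cos (lambda * t) + lambda * f2 t * sin (lambda * t)
          = lambda * ((cos (lambda * t)) * (cos (lambda * t)) + (sin (lambda * t)) * (sin (lambda * t))) / cos t"
      proof -
        have gen: "\<And>a b c::real. lambda * (a / c) * a + lambda * (b / c) * b = lambda * (a * a + b * b) / c"
          by (simp add: add_divide_distrib distrib_left)
        show ?thesis unfolding f1_def f2_def by (rule gen)
      qed
      also have "\<dots> = lambda * S t" by (simp only: sin_cos_squared_add3) (simp add: S_def)
      finally show ?thesis unfolding Q_def by (simp add: algebra_simps)
    qed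
    ultimately show ?thesis by simp
  qed
  have dQ: "(Q has_real_derivative lambda * P t) (at t within I)" if "t \<in> I" for t
  proof -
    have "(Q has_real_derivative
       lambda * f1 t * sin (lambda * t) + u t * (cos (lambda * t) * lambda)
       - (lambda * f2 t * cos (lambda * t) + v t * (- sin (lambda * t) * lambda))) (at t within I)"
      unfolding Q_def u_def v_def
      by (rule derivative_eq_intros dF[OF that] dG[OF that] refl | simp)+
    moreover have "lambda * f1 t * sin (lambda * t) + u t * (cos (lambda * t) * lambda)
       - (lambda * f2 t * cos (lambda * t) + v t * (- sin (lambda * t) * lambda)) = lambda * P t"
      unfolding f1_def f2_def P_def by (simp add: field_simps)
    ultimately show ?thesis by simp
  qed
  have dS: "(S has_real_derivative S1 t) (at t within I)" if "t \<in> I" for t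
    unfolding S_def S1_def using cpos[OF that]
    by (auto intro!: derivative_eq_intros simp: power2_eq_square)
  have dS1: "(S1 has_real_derivative S2 t) (at t within I)" if "t \<in> I" for t
  proof -
    have c: "cos t \<noteq> 0" using cpos[OF that] by simp
    show ?thesis unfolding S1_def S2_def
      apply (rule derivative_eq_intros refl)+
       apply (simp add: c)
      apply (simp add: c field_simps power2_eq_square power3_eq_cube)
      using sin_cos_squared_add3[of t] by algebra
  qed
  have dR: "(R has_real_derivative Rd t) (at t within I)" if "t \<in> I" for t
  proof -
    have c: "2 - (cos t)\<^sup>2 \<noteq> 0" using c2pos[of t] by simp
    have c': "cos t * cos t \<noteq> 2" using c by (simp add: power2_eq_square)
    show ?thesis unfolding R_def Rd_def
      apply (rule derivative_eq_intros refl)+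
      using c apply (simp_all)
      using c apply (simp add: field_simps power2_eq_square)
      done
  qed
  have RS2: "R t * S2 t = S t" if "t \<in> I" for t
    using cpos[OF that] c2pos[of t] unfolding R_def S2_def S_def
    by (simp add: field_simps power2_eq_square power3_eq_cube)
  have dD: "(D has_real_derivative - Rd t * N t) (at t within I)" if "t \<in> I" for t
    unfolding D_def N_def
    apply (rule derivative_eq_intros dS[OF that] dS1[OF that] dP[OF that] dQ[OF that] dR[OF that] refl)+
    apply (simp add: power2_eq_square)
    using RS2[OF that, symmetric] by (simp add: algebra_simps)
  have D0: "D 0 = 0"
    unfolding D_def N_def S_def S1_def P_def Q_def u_def v_def F_def G_def R_def by simp
  have Dy: "D y \<ge> 0"
  proof -
    have cont0: "continuous_on I D" by (rule DERIV_continuous_on[OF dD])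
    have cont: "continuous_on {0..y} D" using cont0 unfolding I_def .
    have der: "\<exists>d. (D has_real_derivative d) (at x) \<and> 0 \<le> d" if x: "0 < x" "x < y" for x
    proof -
      have xI: "x \<in> I" using x unfolding I_def by simp
      have "(D has_real_derivative - Rd x * N x) (at x within {0<..<y})"
      proof (rule DERIV_subset[OF dD[OF xI]])
        show "{0<..<y} \<subseteq> I" unfolding I_def by auto
      qed
      then have "(D has_real_derivative - Rd x * N x) (at x)"
      proof -
        have "at x within {0<..<y} = at x" by (rule at_within_open) (use x in auto)
        with \<open>(D has_real_derivative - Rd x * N x) (at x within {0<..<y})\<close> show ?thesis by (simp only:)
      qed
      moreover have "- Rd x * N x \<ge> 0"
      proof -
        have "sin x > 0" using x assms by (intro sin_gt_zero) auto
        then have "4 * cos x * sin x / (2 - (cos x)\<^sup>2)\<^sup>2 \<ge> 0" using cpos[OF xI]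
          by (intro divide_nonneg_nonneg mult_nonneg_nonneg) auto
        then have "- Rd x \<ge> 0" unfolding Rd_def by (simp only: minus_divide_left minus_mult_left minus_minus)
        moreover have "N x \<ge> 0" unfolding N_def by (intro add_nonneg_nonneg mult_nonneg_nonneg zero_le_power2)
        ultimately show ?thesis by (rule mult_nonneg_nonneg)
      qed
      ultimately show ?thesis by blast
    qed
    have "D 0 \<le> D y"
      by (rule DERIV_nonneg_imp_increasing_open[OF _ der cont]) (use assms in auto)
    then show ?thesis using D0 by simp
  qed
  have yI: "y \<in> I" using assms by (simp add: I_def)
  have T: "(u y)\<^sup>2 + (v y)\<^sup>2 = (P y)\<^sup>2 + (Q y)\<^sup>2"
    unfolding P_def Q_def using sin_cos_squared_add[of "lambda * y"] by algebra
  have main: "(P y)\<^sup>2 + (Q y)\<^sup>2 < (S y)\<^sup>2"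
  proof (rule ccontr)
    assume ne: "\<not> ?thesis"
    have Rp: "R y > 0" unfolding R_def using cpos[OF yI] c2pos[of y] by simp
    have Nn: "N y \<ge> 0" unfolding N_def by simp
    have "R y * N y \<le> 0" using ne Dy unfolding D_def by simp
    then have "N y = 0" using Rp Nn by (simp add: mult_le_0_iff)
    then have a: "S1 y = lambda * P y" and b: "lambda\<^sup>2 * (S y - Q y)\<^sup>2 = 0"
      unfolding N_def by (auto simp: add_nonneg_eq_0_iff)
    have "sin y > 0" using assms by (intro sin_gt_zero) auto
    then have "S1 y > 0" unfolding S1_def using cpos[OF yI] by simp
    then have l: "lambda \<noteq> 0" and p: "P y \<noteq> 0" using a by auto
    then have "Q y = S y" using b by simp
    then have "(S y)\<^sup>2 - (P y)\<^sup>2 - (Q y)\<^sup>2 < 0" using p by simp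
    moreover have "(S y)\<^sup>2 - (P y)\<^sup>2 - (Q y)\<^sup>2 \<ge> 0" using Dy \<open>N y = 0\<close> unfolding D_def by simp
    ultimately show False by simp
  qed
  show ?thesis using main T unfolding u_def v_def F_def G_def f1_def f2_def S_def
    by (simp add: power_one_over)
qed

end
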